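(* Consider a batch contextual bandit with finite context space $\mathcal{S}$, finite action space $\mathcal{A}$, context distribution $d_0$, reward distributions $R(s,a)\in\Delta([0,R_{\max}])$, behavior policy $\pi_b$, $\mu:=d_0\times\pi_b$, and finite class $\mathcal{F}$ of functions $\mathcal{S}\times\mathcal{A}\to[0,R_{\max}]$. Suppose $C<+\infty$ satisfies $\pi_b(a\mid s)\ge1/C$ for all $s,a$, and suppose $f^\star\in\mathcal{F}$ is a valid reward function, i.e. $\mathbb{E}_{(s,a)\sim\nu}[f^\star(s,a)]=\mathbb{E}_{(s,a)\sim\nu,\,r\sim R(s,a)}[r]$ for every admissible $\nu$ and $\mathcal{L}_\mu(f')-\mathcal{L}_\mu(f^\star)=\|f'-f^\star\|_\mu^2$ for every $f'\in\mathcal{F}$. Let $Q^\star(s,a)=\mathbb{E}_{r\sim R(s,a)}[r]$, $\epsilon_{\mathrm{approx}}:=\inf_{f\in\mathcal{F}}\|f-Q^\star\|_\mu^2$, and let $\epsilon\ge0$ satisfy $\epsilon\le\epsilon_{\mathrm{approx}}/2$. Then $$v^\star-2\sqrt{C(\epsilon+\epsilon_{\mathrm{approx}})}\ \le\ v^{\pi_{f^\star}}-2\sqrt{C\epsilon}.$$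
   Context: $\mathcal{L}_\mu(f):=\mathbb{E}_{(s,a)\sim\mu,\,r\sim R(s,a)}[(f(s,a)-r)^2]$; $\|g\|_\nu^2:=\mathbb{E}_{(s,a)\sim\nu}[g(s,a)^2]$; $\pi_f$ is the greedy policy $s\mapsto\arg\max_af(s,a)$ (fixed tie-breaking); admissible distributions are $d_0\times\pi_f$ for $f\in\mathcal{F}$; $v^\pi:=\mathbb{E}_{s\sim d_0,\,r\sim R(s,\pi(s))}[r]$; $v^\star:=\mathbb{E}_{s\sim d_0}[\max_aQ^\star(s,a)]$. *)

theory Defs
  imports "HOL-Probability.Probability"
begin

definition joint :: "'s pmf \<Rightarrow> ('s \<Rightarrow> 'a pmf) \<Rightarrow> ('s \<times> 'a) pmf" where
  "joint d pol = bind_pmf d (\<lambda>s. map_pmf (\<lambda>a. (s, a)) (pol s))"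

definition det_policy :: "('s \<Rightarrow> 'a) \<Rightarrow> 's \<Rightarrow> 'a pmf" where
  "det_policy pol s = return_pmf (pol s)"

definition greedy :: "('s \<Rightarrow> 'a \<Rightarrow> real) \<Rightarrow> 's \<Rightarrow> 'a" where
  "greedy f s = (SOME a. \<forall>b. f s b \<le> f s a)"

definition mean_reward :: "('s \<Rightarrow> 'a \<Rightarrow> real measure) \<Rightarrow> 's \<Rightarrow> 'a \<Rightarrow> real" where
  "mean_reward R s a = (\<integral>r. r \<partial>(R s a))"

definition sq_loss :: "('s \<times> 'a) pmf \<Rightarrow> ('s \<Rightarrow> 'a \<Rightarrow> real measure) \<Rightarrow> ('s \<Rightarrow> 'a \<Rightarrow> real) \<Rightarrow> real" where
  "sq_loss mu R f = measure_pmf.expectation mu (\<lambda>(s, a). \<integral>r. (f s a - r)^2 \<partial>(R s a))"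

definition sq_norm :: "('s \<times> 'a) pmf \<Rightarrow> ('s \<Rightarrow> 'a \<Rightarrow> real) \<Rightarrow> real" where
  "sq_norm nu g = measure_pmf.expectation nu (\<lambda>(s, a). (g s a)^2)"

definition admissible :: "'s pmf \<Rightarrow> ('s \<Rightarrow> 'a \<Rightarrow> real) set \<Rightarrow> ('s \<times> 'a) pmf \<Rightarrow> bool" where
  "admissible d0 F nu \<longleftrightarrow> (\<exists>f\<in>F. nu = joint d0 (det_policy (greedy f)))"

definition policy_value :: "'s pmf \<Rightarrow> ('s \<Rightarrow> 'a \<Rightarrow> real measure) \<Rightarrow> ('s \<Rightarrow> 'a) \<Rightarrow> real" where
  "policy_value d0 R pol = measure_pmf.expectation d0 (\<lambda>s. \<integral>r. r \<partial>(R s (pol s)))"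

definition opt_value :: "'s pmf \<Rightarrow> ('s \<Rightarrow> 'a::finite \<Rightarrow> real measure) \<Rightarrow> real" where
  "opt_value d0 R = measure_pmf.expectation d0 (\<lambda>s. Max (range (mean_reward R s)))"

end

theory Submission
  imports Defs
begin

lemma exp_fin: "measure_pmf.expectation (M::('x::finite) pmf) f = (\<Sum>x\<in>UNIV. pmf M x * f x)"
  by (subst integral_measure_pmf[of UNIV]) auto

lemma pmf_joint: "pmf (joint d pol) (s, a) = pmf d s * pmf (pol s) a"
proof -
  have "pmf (joint d pol) (s, a) = measure_pmf.expectation d (\<lambda>s'. pmf (map_pmf (\<lambda>a. (s', a)) (pol s')) (s, a))"
    unfolding joint_def pmf_bind by simp
  also have "\<dots> = measure_pmf.expectation d (\<lambda>s'. if s' = s then pmf (pol s) a else 0)"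
  proof (rule Bochner_Integration.integral_cong[OF refl])
    fix s' show "pmf (map_pmf (\<lambda>a. (s', a)) (pol s')) (s, a) = (if s' = s then pmf (pol s) a else 0)"
    proof (cases "s' = s")
      case True
      then show ?thesis using pmf_map_inj'[of "\<lambda>a. (s, a)" "pol s" a] by (simp add: inj_def)
    next
      case False
      then show ?thesis by (auto simp: pmf_eq_0_set_pmf)
    qed
  qed
  also have "\<dots> = pmf d s * pmf (pol s) a"
    by (simp add: integral_measure_pmf_real[where A="{s}"] split: if_splits) 
  finally show ?thesis .
qed

lemma Rint:
  assumes "prob_space M" "sets M = sets borel" "AE r in M. r \<in> {0..B}"
  shows "integrable M (\<lambda>r::real. r)" "integrable M (\<lambda>r. r^2)"
    "(\<integral>r. (c - r)^2 \<partial>M) = c^2 - 2 * c * (\<integral>r. r \<partial>M) + (\<integral>r. r^2 \<partial>M)"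
proof -
  interpret prob_space M by fact
  have m1: "(\<lambda>r::real. r) \<in> borel_measurable M" unfolding measurable_cong_sets[OF assms(2) refl] by simp
  have m2: "(\<lambda>r::real. r^2) \<in> borel_measurable M" unfolding measurable_cong_sets[OF assms(2) refl] by simp
  show i1: "integrable M (\<lambda>r::real. r)"
    by (rule integrable_const_bound[where B=B]) (use assms(3) m1 in \<open>auto elim!: AE_mp\<close>)
  show i2: "integrable M (\<lambda>r. r^2)"
    apply (rule integrable_const_bound[where B="B^2"])
    using assms(3) m2 by (auto elim!: AE_mp intro: power_mono)
  have "(\<integral>r. (c - r)^2 \<partial>M) = (\<integral>r. c^2 - 2 * c * r + r^2 \<partial>M)"
    by (simp add: power2_diff algebra_simps)
  also have "\<dots> = c^2 - 2 * c * (\<integral>r. r \<partial>M) + (\<integral>r. r^2 \<partial>M)"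
    using i1 i2 by (simp add: prob_space)
  finally show "(\<integral>r. (c - r)^2 \<partial>M) = c^2 - 2 * c * (\<integral>r. r \<partial>M) + (\<integral>r. r^2 \<partial>M)" .
qed

lemma cs_prob:
  fixes d :: "'x::finite \<Rightarrow> real"
  assumes "\<And>x. d x \<ge> 0" "sum d UNIV = 1"
  shows "(\<Sum>x\<in>UNIV. d x * \<bar>g x\<bar>) \<le> sqrt (\<Sum>x\<in>UNIV. d x * (g x)^2)"
proof -
  have "(\<Sum>x\<in>UNIV. sqrt (d x) * (sqrt (d x) * \<bar>g x\<bar>))^2 \<le> (\<Sum>x\<in>UNIV. (sqrt (d x))^2) * (\<Sum>x\<in>UNIV. (sqrt (d x) * \<bar>g x\<bar>)^2)"
    by (rule Cauchy_Schwarz_ineq_sum)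
  also have "\<dots> = (\<Sum>x\<in>UNIV. d x * (g x)^2)"
    using assms by (simp add: power_mult_distrib)
  finally have "(\<Sum>x\<in>UNIV. d x * \<bar>g x\<bar>)^2 \<le> (\<Sum>x\<in>UNIV. d x * (g x)^2)"
    using assms(1) by (simp add: mult.assoc[symmetric])
  then show ?thesis using real_le_rsqrt by blast
qed

lemma final_arith:
  fixes C N e v vs :: real
  assumes "C > 0" "0 \<le> e" "e \<le> N / 2" "vs - v \<le> sqrt (C * N)"
  shows "vs - 2 * sqrt (C * (e + N)) \<le> v - 2 * sqrt (C * e)"
proof -
  define x y z where "x = sqrt (C * N)" and "y = sqrt (C * e)" and "z = sqrt (C * (e + N))"
  have N0: "N \<ge> 0" using assms by simp
  have x0: "x \<ge> 0" and y0: "y \<ge> 0" and z0: "z \<ge> 0" using assms N0 by (auto simp: x_def y_def z_def)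
  have zz: "z^2 = x^2 + y^2" using assms N0 by (simp add: x_def y_def z_def algebra_simps)
  have yx: "y^2 \<le> x^2 / 2" using assms N0 by (simp add: x_def y_def)
  have h0: "0 \<le> x^2" by simp
  have "y^2*16 \<le> 9*x^2" using yx h0 by linarith
  then have y2: "y^2 \<le> (3/4*x)^2" by (simp add: power_mult_distrib power_divide)
  then have yl: "y \<le> 3 / 4 * x" using power2_le_imp_le[OF y2] x0 by simp
  have "x * y \<le> x * (3/4*x)" by (rule mult_left_mono[OF yl x0])
  then have s2: "(x + 2*y)^2 \<le> (2*z)^2" using zz
    by (simp add: power2_eq_square algebra_simps)
  then have "x + 2*y \<le> 2*z" using power2_le_imp_le[OF s2] z0 by simp
  then show ?thesis using assms(4) by (simp add: x_def y_def z_def)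
qed


lemma exp_joint:
  "measure_pmf.expectation (joint d pol) (\<lambda>(s, a). h s a)
   = (\<Sum>s\<in>UNIV. \<Sum>a\<in>UNIV. pmf d s * pmf (pol s) a * h s a)"
  for d :: "'s::finite pmf" and pol :: "'s \<Rightarrow> 'a::finite pmf"
proof -
  have pj: "\<And>x. pmf (joint d pol) x = pmf d (fst x) * pmf (pol (fst x)) (snd x)"
    by (metis pmf_joint prod.collapse)
  show ?thesis by (simp add: exp_fin sum.cartesian_product pj split_beta mult.assoc)
qed

lemma exp_det:
  "measure_pmf.expectation (joint d (det_policy p)) (\<lambda>(s, a). h s a)
   = (\<Sum>s\<in>UNIV. pmf d s * h s (p s))"
  for d :: "'s::finite pmf" and p :: "'s \<Rightarrow> 'a::finite"
proof -
  have "\<And>s. (\<Sum>a\<in>UNIV. pmf d s * pmf (det_policy p s) a * h s a) = pmf d s * h s (p s)"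
  proof -
    fix s
    have eq: "(\<lambda>a. pmf d s * pmf (det_policy p s) a * h s a) = (\<lambda>a. if a = p s then pmf d s * h s a else 0)"
      by (auto simp: det_policy_def)
    show "(\<Sum>a\<in>UNIV. pmf d s * pmf (det_policy p s) a * h s a) = pmf d s * h s (p s)"
      by (simp only: eq) simp
  qed
  then show ?thesis by (simp add: exp_joint)
qed

lemma greedy_max:
  fixes f :: "'s \<Rightarrow> 'a::finite \<Rightarrow> real"
  shows "f s b \<le> f s (greedy f s)" "f s (greedy f s) = Max (range (f s))"
proof -
  have "Max (range (f s)) \<in> range (f s)" by (intro Max_in) auto
  then obtain a where a: "f s a = Max (range (f s))" by (metis imageE)
  have ex: "\<exists>a. \<forall>b. f s b \<le> f s a" using a by (metis Max_ge finite UNIV_I finite_imageI image_eqI)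
  have g: "\<forall>b. f s b \<le> f s (greedy f s)" unfolding greedy_def by (rule someI_ex[OF ex])
  then show "f s b \<le> f s (greedy f s)" by blast
  show "f s (greedy f s) = Max (range (f s))"
    using g by (intro antisym Max_ge Max.boundedI) auto
qed

theorem proposition1:
  fixes d0 :: "'s::finite pmf"
    and R :: "'s \<Rightarrow> 'a::finite \<Rightarrow> real measure"
    and Rmax :: real
    and pib :: "'s \<Rightarrow> 'a pmf"
    and F :: "('s \<Rightarrow> 'a \<Rightarrow> real) set"
    and C :: real
    and fstar :: "'s \<Rightarrow> 'a \<Rightarrow> real"
    and eps :: real
  assumes R_prob: "\<And>s a. prob_space (R s a)"
    and R_borel: "\<And>s a. sets (R s a) = sets borel"
    and R_range: "\<And>s a. AE r in R s a. r \<in> {0..Rmax}"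
    and F_fin: "finite F"
    and F_range: "\<And>f s a. f \<in> F \<Longrightarrow> f s a \<in> {0..Rmax}"
    and C_pos: "C > 0"
    and cover: "\<And>s a. pmf (pib s) a \<ge> 1 / C"
    and fstar_in: "fstar \<in> F"
    and fstar_valid1: "\<And>nu. admissible d0 F nu \<Longrightarrow>
          measure_pmf.expectation nu (\<lambda>(s, a). fstar s a)
          = measure_pmf.expectation nu (\<lambda>(s, a). \<integral>r. r \<partial>(R s a))"
    and fstar_valid2: "\<And>f'. f' \<in> F \<Longrightarrow>
          sq_loss (joint d0 pib) R f' - sq_loss (joint d0 pib) R fstar
          = sq_norm (joint d0 pib) (\<lambda>s a. f' s a - fstar s a)"
    and eps_nonneg: "eps \<ge> 0"
    and eps_le: "eps \<le> (INF f\<in>F. sq_norm (joint d0 pib) (\<lambda>s a. f s a - mean_reward R s a)) / 2"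
  shows "opt_value d0 R
           - 2 * sqrt (C * (eps + (INF f\<in>F. sq_norm (joint d0 pib) (\<lambda>s a. f s a - mean_reward R s a))))
         \<le> policy_value d0 R (greedy fstar) - 2 * sqrt (C * eps)"
proof -
  define w where "w s a = pmf d0 s * pmf (pib s) a" for s a
  define Q where "Q = mean_reward R"
  define S where "S s a = (\<integral>r. r^2 \<partial>(R s a))" for s a
  define N where "N = sq_norm (joint d0 pib) (\<lambda>s a. fstar s a - Q s a)"
  have w0: "w s a \<ge> 0" for s a by (simp add: w_def)
  have norm_eq: "sq_norm (joint d0 pib) g = (\<Sum>s\<in>UNIV. \<Sum>a\<in>UNIV. w s a * (g s a)^2)" for g
    unfolding sq_norm_def by (simp add: exp_joint w_def)
  have norm_nn: "sq_norm (joint d0 pib) g \<ge> 0" for g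
    unfolding norm_eq by (intro sum_nonneg) (simp add: w0)
  have loss_eq: "sq_loss (joint d0 pib) R f = (\<Sum>s\<in>UNIV. \<Sum>a\<in>UNIV. w s a * ((f s a)^2 - 2 * f s a * Q s a + S s a))" for f
    unfolding sq_loss_def exp_joint w_def Q_def S_def mean_reward_def
    using Rint(3)[OF R_prob R_borel R_range] by simp
  have Nle: "N \<le> sq_norm (joint d0 pib) (\<lambda>s a. f s a - Q s a)" if f: "f \<in> F" for f
  proof -
    have "sq_norm (joint d0 pib) (\<lambda>s a. f s a - Q s a) - N
        = sq_loss (joint d0 pib) R f - sq_loss (joint d0 pib) R fstar"
      unfolding N_def norm_eq loss_eq sum_subtractf[symmetric]
      by (intro sum.cong refl) (simp add: algebra_simps power2_eq_square)
    also have "\<dots> \<ge> 0" using fstar_valid2[OF f] norm_nn by simp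
    finally show ?thesis by simp
  qed
  have INF_eq: "(INF f\<in>F. sq_norm (joint d0 pib) (\<lambda>s a. f s a - mean_reward R s a)) = N"
  proof (rule antisym)
    show "(INF f\<in>F. sq_norm (joint d0 pib) (\<lambda>s a. f s a - mean_reward R s a)) \<le> N"
      unfolding N_def Q_def using F_fin fstar_in by (intro cINF_lower) auto
    show "N \<le> (INF f\<in>F. sq_norm (joint d0 pib) (\<lambda>s a. f s a - mean_reward R s a))"
      using fstar_in Nle unfolding Q_def by (intro cINF_greatest) auto
  qed
  define p where "p = greedy fstar"
  define as where "as = greedy Q"
  have adm: "admissible d0 F (joint d0 (det_policy p))"
    unfolding admissible_def p_def using fstar_in by blast
  have pv: "policy_value d0 R p = (\<Sum>s\<in>UNIV. pmf d0 s * fstar s (p s))"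
  proof -
    have "(\<Sum>s\<in>UNIV. pmf d0 s * fstar s (p s)) = (\<Sum>s\<in>UNIV. pmf d0 s * (\<integral>r. r \<partial>(R s (p s))))"
      using fstar_valid1[OF adm] by (simp only: exp_det)
    then show ?thesis unfolding policy_value_def exp_fin by simp
  qed
  have ov: "opt_value d0 R = (\<Sum>s\<in>UNIV. pmf d0 s * Q s (as s))"
    unfolding opt_value_def exp_fin as_def greedy_max(2) Q_def ..
  define g where "g s = fstar s (as s) - Q s (as s)" for s
  have "opt_value d0 R - policy_value d0 R p = (\<Sum>s\<in>UNIV. pmf d0 s * (Q s (as s) - fstar s (p s)))"
    unfolding ov pv sum_subtractf[symmetric] by (simp only: right_diff_distrib)
  also have "\<dots> \<le> (\<Sum>s\<in>UNIV. pmf d0 s * \<bar>g s\<bar>)"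
  proof (intro sum_mono mult_left_mono)
    fix s
    have "fstar s (as s) \<le> fstar s (p s)" unfolding p_def by (rule greedy_max(1))
    then show "Q s (as s) - fstar s (p s) \<le> \<bar>g s\<bar>" unfolding g_def by simp
  qed simp
  also have "\<dots> \<le> sqrt (\<Sum>s\<in>UNIV. pmf d0 s * (g s)^2)"
    by (rule cs_prob) (auto intro: sum_pmf_eq_1)
  also have "\<dots> \<le> sqrt (C * N)"
  proof (rule real_sqrt_le_mono)
    have "pmf d0 s * (g s)^2 \<le> C * (\<Sum>a\<in>UNIV. w s a * (fstar s a - Q s a)^2)" for s
    proof -
      have c1: "1 \<le> C * pmf (pib s) (as s)" using cover[of s "as s"] C_pos
        by (simp add: field_simps)
      have "(g s)^2 \<le> C * pmf (pib s) (as s) * (g s)^2"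
        using mult_right_mono[OF c1 zero_le_power2[of "g s"]] by simp
      also have "\<dots> = C * (pmf (pib s) (as s) * (fstar s (as s) - Q s (as s))^2)"
        by (simp add: g_def)
      also have "\<dots> \<le> C * (\<Sum>a\<in>UNIV. pmf (pib s) a * (fstar s a - Q s a)^2)"
        using C_pos by (intro mult_left_mono member_le_sum) auto
      finally have "pmf d0 s * (g s)^2 \<le> pmf d0 s * (C * (\<Sum>a\<in>UNIV. pmf (pib s) a * (fstar s a - Q s a)^2))"
        by (rule mult_left_mono) simp
      also have "\<dots> = C * (\<Sum>a\<in>UNIV. w s a * (fstar s a - Q s a)^2)"
        by (simp add: w_def sum_distrib_left mult_ac)
      finally show ?thesis .
    qed
    then have "(\<Sum>s\<in>UNIV. pmf d0 s * (g s)^2) \<le> (\<Sum>s\<in>UNIV. C * (\<Sum>a\<in>UNIV. w s a * (fstar s a - Q s a)^2))"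
      by (rule sum_mono)
    also have "\<dots> = C * N" unfolding N_def norm_eq sum_distrib_left ..
    finally show "(\<Sum>s\<in>UNIV. pmf d0 s * (g s)^2) \<le> C * N" .
  qed
  finally have key: "opt_value d0 R - policy_value d0 R p \<le> sqrt (C * N)" .
  have "0 \<le> eps" "eps \<le> N / 2" using eps_nonneg eps_le INF_eq by auto
  from final_arith[OF C_pos this key] show ?thesis unfolding INF_eq p_def .
qed

end
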